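(* Let $G$ be a $2$-tuple regular finite group and let $a,b,a',b'\in G$ be such that $a\mapsto a',b\mapsto b'$ defines an isomorphism $\langle a,b\rangle\to\langle a',b'\rangle$. If $b=gag^{-1}$ for some $g\in G$, then there exists $g'\in G$ with $\operatorname{ord}(g')=\operatorname{ord}(g)$ and $b'=g'a'g'^{-1}$.
   Context: A finite group $G$ is $2$-tuple regular if for all pairs $(g_1,g_2),(h_1,h_2)\in G^2$ (entries may coincide) for which $g_1\mapsto h_1,g_2\mapsto h_2$ defines an isomorphism $\langle g_1,g_2\rangle\to\langle h_1,h_2\rangle$, there is a bijection $\Psi\colon G\to G$ such that for every $g\in G$ the assignment $g_1\mapsto h_1,g_2\mapsto h_2,g\mapsto\Psi(g)$ defines an isomorphism $\langle g_1,g_2,g\rangle\to\langle h_1,h_2,\Psi(g)\rangle$. *)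

theory Defs
  imports "HOL-Algebra.Algebra"
begin

definition assign_iso :: "('a, 'b) monoid_scheme \<Rightarrow> 'a list \<Rightarrow> 'a list \<Rightarrow> bool" where
  "assign_iso G xs ys \<longleftrightarrow> length xs = length ys \<and>
     (\<exists>\<phi>. \<phi> \<in> iso (G\<lparr>carrier := generate G (set xs)\<rparr>) (G\<lparr>carrier := generate G (set ys)\<rparr>)
          \<and> (\<forall>i < length xs. \<phi> (xs ! i) = ys ! i))"

definition two_tuple_regular :: "('a, 'b) monoid_scheme \<Rightarrow> bool" where
  "two_tuple_regular G \<longleftrightarrow>
     (\<forall>g1 \<in> carrier G. \<forall>g2 \<in> carrier G. \<forall>h1 \<in> carrier G. \<forall>h2 \<in> carrier G.
        assign_iso G [g1, g2] [h1, h2] \<longrightarrow>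
        (\<exists>\<Psi>. bij_betw \<Psi> (carrier G) (carrier G) \<and>
             (\<forall>g \<in> carrier G. assign_iso G [g1, g2, g] [h1, h2, \<Psi> g])))"

end

theory Submission
  imports Defs
begin

lemma pow_sub_eq: "pow (G\<lparr>carrier := H\<rparr>) x (n::nat) = pow G x n"
  by (simp add: nat_pow_def)

theorem lemma3p7:
  fixes G (structure)
  assumes "group G" and "finite (carrier G)" and "two_tuple_regular G"
    and "a \<in> carrier G" and "b \<in> carrier G" and "a' \<in> carrier G" and "b' \<in> carrier G"
    and "assign_iso G [a, b] [a', b']"
    and "g \<in> carrier G" and "b = g \<otimes> a \<otimes> inv g"
  shows "\<exists>g' \<in> carrier G. group.ord G g' = group.ord G g \<and> b' = g' \<otimes> a' \<otimes> inv g'"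
proof -
  interpret group G by fact
  obtain \<Psi> where bij: "bij_betw \<Psi> (carrier G) (carrier G)"
    and P: "\<forall>x \<in> carrier G. assign_iso G [a, b, x] [a', b', \<Psi> x]"
    using assms(3) assms(4-8) unfolding two_tuple_regular_def by blast
  define g' where "g' = \<Psi> g"
  have g'c: "g' \<in> carrier G" using bij assms(9) unfolding g'_def bij_betw_def by auto
  obtain \<phi> where iso: "\<phi> \<in> iso (G\<lparr>carrier := generate G (set [a,b,g])\<rparr>) (G\<lparr>carrier := generate G (set [a',b',g'])\<rparr>)"
    and ph: "\<forall>i < 3. \<phi> ([a,b,g] ! i) = [a',b',g'] ! i"
    using P assms(9) unfolding assign_iso_def g'_def by force
  have pa: "\<phi> a = a'" using ph[rule_format, of 0] by simp
  have pb: "\<phi> b = b'" using ph[rule_format, of 1] by simp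
  have pg: "\<phi> g = g'" using ph[rule_format, of 2] by simp
  define H where "H = generate G (set [a,b,g])"
  define H' where "H' = generate G (set [a',b',g'])"
  have sH: "subgroup H G" unfolding H_def using assms(4,5,9) by (intro generate_is_subgroup) auto
  have sH': "subgroup H' G" unfolding H'_def using assms(6,7) g'c by (intro generate_is_subgroup) auto
  have gH: "group (G\<lparr>carrier := H\<rparr>)" using sH by (rule subgroup.subgroup_is_group) (rule is_group)
  have gH': "group (G\<lparr>carrier := H'\<rparr>)" using sH' by (rule subgroup.subgroup_is_group) (rule is_group)
  have hom: "\<phi> \<in> hom (G\<lparr>carrier := H\<rparr>) (G\<lparr>carrier := H'\<rparr>)"
    using iso unfolding H_def H'_def iso_def by auto
  have inj: "inj_on \<phi> H" using iso unfolding H_def H'_def iso_def bij_betw_def by auto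
  interpret gh: group_hom "G\<lparr>carrier := H\<rparr>" "G\<lparr>carrier := H'\<rparr>" \<phi>
    using gH gH' hom by (simp add: group_hom_def group_hom_axioms_def)
  have aH: "a \<in> H" and bH: "b \<in> H" and gH: "g \<in> H"
    unfolding H_def by (auto intro: generate.incl)
  have invg: "inv\<^bsub>G\<lparr>carrier := H\<rparr>\<^esub> g = inv g" using sH gH
    by (simp add: m_inv_consistent)
  have invg': "inv\<^bsub>G\<lparr>carrier := H'\<rparr>\<^esub> g' = inv g'"
  proof -
    have "g' \<in> H'" unfolding H'_def by (auto intro: generate.incl)
    then show ?thesis using sH' by (simp add: m_inv_consistent)
  qed
  have ginvH: "inv g \<in> H" using sH gH by (simp add: subgroup.m_inv_closed)
  have "b' = \<phi> (g \<otimes> a \<otimes> inv g)" using pb assms(10) by simp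
  also have "\<dots> = \<phi> g \<otimes> \<phi> a \<otimes> \<phi> (inv g)"
    using gh.hom_mult[of "g \<otimes> a" "inv g"] gh.hom_mult[of g a] aH gH ginvH sH
    by (simp add: subgroup.m_closed)
  also have "\<phi> (inv g) = inv g'"
    using gh.hom_inv[of g] gH invg invg' pg by simp
  finally have conj: "b' = g' \<otimes> a' \<otimes> inv g'" using pa pg by simp
  have powiff: "g' [^] n = \<one> \<longleftrightarrow> g [^] n = \<one>" for n :: nat
  proof -
    have "g [^]\<^bsub>G\<lparr>carrier := H\<rparr>\<^esub> n \<in> carrier (G\<lparr>carrier := H\<rparr>)"
      using gh.G.nat_pow_closed[of g n] gH by simp
    then have gnH: "g [^] n \<in> H" by (simp add: pow_sub_eq)
    have "\<phi> (g [^] n) = g' [^] n"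
      using gh.hom_nat_pow[of g n] gH pg by (simp add: pow_sub_eq)
    moreover have "\<phi> \<one> = \<one>" using gh.hom_one by simp
    moreover have oneH: "\<one> \<in> H" using sH by (simp add: subgroup.one_closed)
    ultimately show ?thesis using inj gnH by (metis inj_on_eq_iff)
  qed
  have "ord g' = ord g"
    using pow_eq_id[OF g'c] pow_eq_id[OF assms(9)] powiff
    by (metis dvd_antisym dvd_refl)
  then show ?thesis using g'c conj by blast
qed

end
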